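(* Let $A\in\mathbb{R}^{r\times n}$, let $f:\mathbb{R}^r\to\mathbb{R}$ be convex, and let $\mathcal{X}\subseteq\mathbb{R}^n$ be any set such that the problem $\max\{f(Ax): x\in\mathcal{X}\}$ has a nonempty set of global optimizers. Then there exists $c\in\mathbb{R}^r$ such that the linear problem $\max_{x\in\mathcal{X}} c^\top Ax$ admits an optimal solution, and every optimal solution of this linear problem is also an optimal solution of $\max\{f(Ax): x\in\mathcal{X}\}$. *)

theory Defs
  imports "HOL-Analysis.Analysis"
begin

end

theory Submission
  imports Defs
begin

lemma subgrad_exists:
  fixes f :: "'a::euclidean_space \<Rightarrow> real"
  assumes cf: "convex_on UNIV f"
  shows "\<exists>g. \<forall>z. f w + g \<bullet> (z - w) \<le> f z"
proof -
  define S where "S = {p :: 'a \<times> real. f (fst p) < snd p}"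
  have cS: "convex S"
    unfolding convex_def S_def
  proof (clarsimp)
    fix a :: 'a and t b s and u v :: real
    assume h: "f a < t" "f b < s" "0 \<le> u" "0 \<le> v" "u + v = 1"
    have "f (u *\<^sub>R a + v *\<^sub>R b) \<le> u * f a + v * f b"
      using cf h by (simp add: convex_on_def)
    also have "\<dots> < u * t + v * s"
    proof (cases "u = 0")
      case True then show ?thesis using h by simp
    next
      case False
      then have "u > 0" using h by simp
      then have "u * f a < u * t" using h by simp
      moreover have "v * f b \<le> v * s" using h by (simp add: mult_left_mono)
      ultimately show ?thesis by simp
    qed
    finally show "f (u *\<^sub>R a + v *\<^sub>R b) < u * t + v * s" .
  qed
  have ne: "S \<noteq> {}" proof
    assume "S = {}"
    moreover have "(w, f w + 1) \<in> S" unfolding S_def by simp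
    ultimately show False by simp
  qed
  have dj: "S \<inter> {(w, f w)} = {}" unfolding S_def by auto
  obtain a b where ab: "a \<noteq> 0" "\<forall>x\<in>S. inner a x \<le> b" "\<forall>x\<in>{(w, f w)}. inner a x \<ge> b"
    using separating_hyperplane_sets[OF cS convex_singleton ne _ dj] by blast
  obtain c s where acs: "a = (c, s)" by (cases a)
  have H: "\<And>z t. f z < t \<Longrightarrow> c \<bullet> z + s * t \<le> b" using ab(2) acs unfolding S_def
    by (auto simp: inner_prod_def)
  have B: "b \<le> c \<bullet> w + s * f w" using ab(3) acs by (auto simp: inner_prod_def)
  have "s \<le> 0"
  proof (rule ccontr)
    assume "\<not> s \<le> 0"
    have "c \<bullet> w + s * (f w + 1) \<le> b" by (rule H) simp
    with B \<open>\<not> s \<le> 0\<close> show False by (simp add: algebra_simps)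
  qed
  moreover have "s \<noteq> 0"
  proof
    assume s0: "s = 0"
    have "c \<bullet> (w + c) \<le> b" using H[of "w + c" "f (w + c) + 1"] s0 by simp
    with B s0 have "c \<bullet> c \<le> 0" by (simp add: inner_add_right)
    then have "c = 0" by (metis inner_gt_zero_iff not_le)
    with s0 acs ab(1) show False by (simp add: zero_prod_def)
  qed
  ultimately have sn: "s < 0" by simp
  have key: "c \<bullet> z + s * f z \<le> c \<bullet> w + s * f w" for z
  proof -
    have "c \<bullet> z + s * f z \<le> c \<bullet> w + s * f w + e" if "e > 0" for e
    proof -
      have "c \<bullet> z + s * (f z + e / (- s)) \<le> b" by (rule H) (use that sn in \<open>simp add: divide_pos_neg\<close>)
      then show ?thesis using B sn by (simp add: algebra_simps)
    qed
    then show ?thesis by (rule field_le_epsilon)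
  qed
  show ?thesis
  proof (intro exI allI)
    fix z
    have "c \<bullet> (z - w) \<le> (- s) * f z - (- s) * f w" using key[of z] by (simp add: inner_diff_right algebra_simps)
    then have "(c \<bullet> (z - w)) / (- s) \<le> f z - f w" using sn
      by (subst pos_divide_le_eq) (auto simp: algebra_simps)
    then show "f w + ((1 / (- s)) *\<^sub>R c) \<bullet> (z - w) \<le> f z" by (simp add: divide_inverse mult.commute)
  qed
qed

theorem proposition5:
  fixes A :: "real ^ 'n ^ 'r"
    and f :: "real ^ 'r \<Rightarrow> real"
    and X :: "(real ^ 'n) set"
  assumes "convex_on UNIV f"
    and "\<exists>x\<in>X. \<forall>y\<in>X. f (A *v y) \<le> f (A *v x)"
  shows "\<exists>c :: real ^ 'r.
           (\<exists>x\<in>X. \<forall>y\<in>X. c \<bullet> (A *v y) \<le> c \<bullet> (A *v x)) \<and>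
           (\<forall>x\<in>X. (\<forall>y\<in>X. c \<bullet> (A *v y) \<le> c \<bullet> (A *v x)) \<longrightarrow>
                    (\<forall>y\<in>X. f (A *v y) \<le> f (A *v x)))"
proof -
  obtain x0 where x0: "x0 \<in> X" "\<forall>y\<in>X. f (A *v y) \<le> f (A *v x0)" using assms(2) by blast
  obtain g where g: "\<And>z. f (A *v x0) + g \<bullet> (z - A *v x0) \<le> f z"
    using subgrad_exists[OF assms(1)] by blast
  have lin: "g \<bullet> (A *v y) \<le> g \<bullet> (A *v x0)" if "y \<in> X" for y
  proof (rule ccontr)
    assume "\<not> ?thesis"
    then have "0 < g \<bullet> (A *v y - A *v x0)" by (simp add: inner_diff_right)
    with g[of "A *v y"] x0(2) that show False by force
  qed
  show ?thesis
  proof (intro exI[of _ g] conjI ballI impI)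
    show "\<exists>x\<in>X. \<forall>y\<in>X. g \<bullet> (A *v y) \<le> g \<bullet> (A *v x)" using x0(1) lin by blast
  next
    fix x y assume "x \<in> X" "\<forall>y\<in>X. g \<bullet> (A *v y) \<le> g \<bullet> (A *v x)" "y \<in> X"
    then have "0 \<le> g \<bullet> (A *v x - A *v x0)" using x0(1) by (simp add: inner_diff_right)
    then have "f (A *v x0) \<le> f (A *v x)" using g[of "A *v x"] by linarith
    with x0(2) \<open>y \<in> X\<close> show "f (A *v y) \<le> f (A *v x)" by force
  qed
qed

end
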